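(* Let $n=p^{2}q^{2}$ with primes $2\leq p<q$. Let $\mathcal{D}_{S_{1}},\mathcal{D}_{S_{2}}$ be subsets of $\mathcal{D}_{[n]}\setminus\{n\}$. If $\mathrm{Spec}(\mathrm{ICG}(n,\mathcal{D}_{S_{1}}))=\mathrm{Spec}(\mathrm{ICG}(n,\mathcal{D}_{S_{2}}))$, then $\mathcal{D}_{S_{1}}=\mathcal{D}_{S_{2}}$.
   Context: For an integer $n\ge1$, identify $\mathbb{Z}_n$ with $[n]=\{1,\dots,n\}$ ($n$ playing the role of $0$). For a positive divisor $d$ of $n$, $G_n(d)=\{j\in[n]:\gcd(j,n)=d\}$. $\mathcal{D}_{[n]}$ denotes the set of all positive divisors of $n$. For $\mathcal{D}\subseteq\mathcal{D}_{[n]}\setminus\{n\}$, $\mathrm{ICG}(n,\mathcal{D})$ denotes the circulant graph $\mathrm{Cay}(\mathbb{Z}_n,S)$ with connection set $S=\bigcup_{d\in\mathcal{D}}G_n(d)$ (vertex set $\mathbb{Z}_n$, $g\sim h$ iff $h-g\in S$); we write $\mathcal{D}=\mathcal{D}_S$. $\mathrm{Spec}$ denotes the multiset of eigenvalues of the adjacency matrix. *)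

theory Defs
  imports "Jordan_Normal_Form.Char_Poly" "HOL-Computational_Algebra.Fundamental_Theorem_Algebra"
begin

text \<open>Z_n is identified with [n] = {1..n}, n playing the role of 0.
  zrep n x is the representative in [n] of the residue class of the integer x.\<close>
definition zrep :: "nat \<Rightarrow> int \<Rightarrow> nat" where
  "zrep n x = (let r = nat (x mod int n) in if r = 0 then n else r)"

definition Gset :: "nat \<Rightarrow> nat \<Rightarrow> nat set" where
  "Gset n d = {j \<in> {1..n}. gcd j n = d}"

definition conn_set :: "nat \<Rightarrow> nat set \<Rightarrow> nat set" where
  "conn_set n D = (\<Union>d\<in>D. Gset n d)"

text \<open>Adjacency matrix of ICG(n,D) = Cay(Z_n, S): the vertex with matrix index i
  (0 \<le> i < n) is the residue class of i; g ~ h iff h - g in S.\<close>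
definition ICG_adj :: "nat \<Rightarrow> nat set \<Rightarrow> complex mat" where
  "ICG_adj n D = mat n n (\<lambda>(i, j). if zrep n (int j - int i) \<in> conn_set n D then 1 else 0)"

definition Spec :: "complex mat \<Rightarrow> complex multiset" where
  "Spec A = proots (char_poly A)"

end

theory Submission
  imports Defs "HOL-Analysis.Complex_Transcendental"
begin


definition W :: "nat \<Rightarrow> nat \<Rightarrow> complex" where
  "W n j = exp(2 * of_real pi * \<i> * of_nat j / of_nat n)"

lemma W_eq_iff: "n \<ge> 1 \<Longrightarrow> W n j = W n k \<longleftrightarrow> j mod n = k mod n"
  unfolding W_def by (rule complex_root_unity_eq)

lemma W_eq_1_iff: "n \<ge> 1 \<Longrightarrow> W n j = 1 \<longleftrightarrow> n dvd j"
  unfolding W_def by (rule complex_root_unity_eq_1)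

lemma W_add: "W n (j + k) = W n j * W n k"
  unfolding W_def by (simp add: add_divide_distrib distrib_left exp_add)

lemma W_0[simp]: "W n 0 = 1" unfolding W_def by simp

lemma W_mult: "W n (j * k) = W n k ^ j"
  by (induction j) (simp_all add: W_add)

lemma W_mod: "n \<ge> 1 \<Longrightarrow> W n (j mod n) = W n j"
  using W_eq_iff by simp

lemma geom_W:
  assumes "n \<ge> 1"
  shows "(\<Sum>j<n. W n (j * e)) = (if n dvd e then of_nat n else 0)"
proof (cases "n dvd e")
  case True
  then have "W n (j * e) = 1" for j using W_eq_1_iff[OF assms] by auto
  then show ?thesis using True by simp
next
  case False
  then have ne: "W n e \<noteq> 1" using W_eq_1_iff[OF assms] by auto
  have "W n e ^ n = 1" using W_mult[of n n e] W_eq_1_iff[OF assms, of "n*e"] by simp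
  then show ?thesis using False ne by (simp add: W_mult sum_gp_strict)
qed

lemma dvd_shift_iff:
  fixes s t n :: nat
  assumes "s < n" "t < n"
  shows "n dvd (n - s + t) \<longleftrightarrow> s = t"
proof
  assume "n dvd (n - s + t)"
  then obtain k where k: "n - s + t = n * k" by (auto elim: dvdE)
  have "k \<noteq> 0"
  proof
    assume "k = 0"
    then have "n - s + t = 0" using k by simp
    then show False using assms by linarith
  qed
  moreover have "k < 2"
  proof (rule ccontr)
    assume "\<not> k < 2"
    then have "n * k \<ge> n * 2" by simp
    then show False using k assms by linarith
  qed
  ultimately have "k = 1" by linarith
  then show "s = t" using k assms by simp
qed (use assms in simp)

lemma reindex_mod:
  fixes i n :: nat
  assumes "i < n"
  shows "(\<Sum>j<n. g j) = (\<Sum>k<n. g ((k + i) mod n))"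
proof (rule sum.reindex_bij_witness[where j = "\<lambda>j. (j + n - i) mod n" and i = "\<lambda>k. (k + i) mod n"])
  fix a assume a: "a \<in> {..<n}"
  have "((a + n - i) mod n + i) mod n = (a + n - i + i) mod n" by (simp add: mod_add_left_eq)
  also have "\<dots> = a" using a assms by simp
  finally show "((a + n - i) mod n + i) mod n = a" .
  then show "g (((a + n - i) mod n + i) mod n) = g a" by simp
next
  fix b assume b: "b \<in> {..<n}"
  have "((b + i) mod n + n - i) mod n = ((b + i) mod n + (n - i)) mod n" using assms by simp
  also have "\<dots> = (b + i + (n - i)) mod n" by (simp add: mod_add_left_eq)
  also have "\<dots> = b" using b assms by simp
  finally show "((b + i) mod n + n - i) mod n = b" .
qed (use assms in auto)

definition circ :: "nat \<Rightarrow> (nat \<Rightarrow> complex) \<Rightarrow> complex mat" where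
  "circ n c = Matrix.mat n n (\<lambda>(i,j). c ((j + n - i) mod n))"

lemma circ_spec:
  assumes n: "n \<ge> 1"
  shows "Spec (circ n c) = image_mset (\<lambda>t. \<Sum>k<n. c k * W n (k*t)) (mset_set {..<n})"
proof -
  define ev where "ev t = (\<Sum>k<n. c k * W n (k*t))" for t
  define F where "F = Matrix.mat n n (\<lambda>(j,t). W n (j*t))"
  define G where "G = Matrix.mat n n (\<lambda>(t,j). W n (j*(n-t)) / of_nat n)"
  define Dg where "Dg = Matrix.mat n n (\<lambda>(i,j). if i = j then ev i else 0)"
  define A where "A = circ n c"
  have cA: "A \<in> carrier_mat n n" and cF: "F \<in> carrier_mat n n" and cG: "G \<in> carrier_mat n n"
    and cD: "Dg \<in> carrier_mat n n"
    by (auto simp: A_def circ_def F_def G_def Dg_def)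
  have GF: "G * F = 1\<^sub>m n"
  proof (rule eq_matI)
    fix s t assume st: "s < dim_row (1\<^sub>m n)" "t < dim_col (1\<^sub>m n)"
    then have st: "s < n" "t < n" by auto
    have "(G*F) $$ (s,t) = (\<Sum>j<n. W n (j*(n-s)) / of_nat n * W n (j*t))"
      using st by (simp add: G_def F_def scalar_prod_def atLeast0LessThan)
    also have "\<dots> = (\<Sum>j<n. W n (j*(n - s + t))) / of_nat n"
      by (simp add: sum_divide_distrib W_add[symmetric] algebra_simps)
    also have "\<dots> = (if s = t then 1 else 0)"
      using geom_W[OF n, of "n - s + t"] dvd_shift_iff[OF st] n by simp
    finally show "(G*F) $$ (s,t) = 1\<^sub>m n $$ (s,t)" using st by simp
  qed (auto simp: G_def F_def)
  have FG: "F * G = 1\<^sub>m n" by (rule mat_mult_left_right_inverse[OF cG cF GF])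
  have AF: "A * F = F * Dg"
  proof (rule eq_matI)
    fix i t assume it: "i < dim_row (F * Dg)" "t < dim_col (F * Dg)"
    then have it: "i < n" "t < n" using cF cD by auto
    have "(A*F) $$ (i,t) = (\<Sum>j<n. c ((j + n - i) mod n) * W n (j*t))"
      using it by (simp add: A_def circ_def F_def scalar_prod_def atLeast0LessThan)
    also have "\<dots> = (\<Sum>k<n. c ((((k + i) mod n) + n - i) mod n) * W n (((k + i) mod n)*t))"
      by (rule reindex_mod[OF it(1)])
    also have "\<dots> = (\<Sum>k<n. W n (i*t) * (c k * W n (k*t)))"
    proof (rule sum.cong[OF refl])
      fix k assume k: "k \<in> {..<n}"
      have "(((k + i) mod n) + n - i) mod n = ((k + i) mod n + (n - i)) mod n" using it by simp
      also have "\<dots> = (k + i + (n - i)) mod n" by (simp add: mod_add_left_eq)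
      also have "\<dots> = k" using k it by simp
      finally have e1: "(((k + i) mod n) + n - i) mod n = k" .
      have "W n (((k + i) mod n)*t) = W n ((k + i)*t)"
        using W_eq_iff[OF n] by (simp add: mod_mult_left_eq)
      also have "\<dots> = W n (k*t) * W n (i*t)" by (simp add: W_add[symmetric] algebra_simps)
      finally show "c ((((k + i) mod n) + n - i) mod n) * W n (((k + i) mod n)*t) = W n (i*t) * (c k * W n (k*t))"
        using e1 by simp
    qed
    also have "\<dots> = W n (i*t) * ev t" by (simp add: ev_def sum_distrib_left)
    also have "\<dots> = (F * Dg) $$ (i,t)"
    proof -
      have "(F * Dg) $$ (i,t) = (\<Sum>j<n. W n (i*j) * (if j = t then ev j else 0))"
        using it by (simp add: F_def Dg_def scalar_prod_def atLeast0LessThan)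
      also have "\<dots> = W n (i*t) * ev t" using it by (simp add: if_distrib cong: if_cong)
      finally show ?thesis by simp
    qed
    finally show "(A*F) $$ (i,t) = (F * Dg) $$ (i,t)" .
  qed (use cA cF cD in auto)
  have "A = A * (F * G)" using cA by (simp add: FG)
  also have "\<dots> = (A * F) * G" using cA cF cG by (simp add: assoc_mult_mat)
  also have "\<dots> = F * Dg * G" by (simp add: AF)
  finally have "similar_mat A Dg"
    by (intro similar_matI[OF _ FG GF]) (use cA cF cG cD in auto)
  then have "char_poly A = char_poly Dg" by (rule char_poly_similar)
  also have "\<dots> = (\<Prod>a\<leftarrow>diag_mat Dg. [:- a, 1:])"
    by (rule char_poly_upper_triangular[OF cD]) (simp add: upper_triangular_def Dg_def)
  also have "diag_mat Dg = map ev [0..<n]" by (simp add: diag_mat_def Dg_def)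
  finally have cp: "char_poly A = (\<Prod>a\<leftarrow>map ev [0..<n]. [:- a, 1:])" .
  have "Spec A = proots (\<Prod>p\<leftarrow>map (\<lambda>a. [:- a, 1:]) (map ev [0..<n]). p)"
    unfolding Spec_def cp by (simp add: comp_def)
  also have "\<dots> = (\<Sum>p\<leftarrow>map (\<lambda>a. [:- a, 1:]) (map ev [0..<n]). proots p)"
    by (rule proots_prod_list) auto
  also have "\<dots> = mset (map ev [0..<n])"
    by (induction n) (simp_all add: proots_linear_factor[of "- _", simplified])
  also have "\<dots> = image_mset ev (mset_set {..<n})"
    by (simp add: atLeast0LessThan[symmetric])
  finally show ?thesis by (simp add: A_def ev_def[abs_def])
qed


fun RM :: "nat list \<Rightarrow> 'a list \<Rightarrow> 'a multiset" where
  "RM (w#ws) (a#as) = replicate_mset w a + RM ws as"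
| "RM _ _ = {#}"

lemma size_RM: "length as = length ws \<Longrightarrow> size (RM ws as) = sum_list ws"
proof (induction ws arbitrary: as)
  case (Cons w ws) then show ?case by (cases as) auto
qed simp

lemma RM_inj:
  assumes "length as = length ws" "length bs = length ws"
    "\<And>i. i < length ws \<Longrightarrow> ws ! i > sum_list (drop (Suc i) ws)"
    "RM ws as = RM ws bs"
  shows "as = bs"
  using assms
proof (induction ws arbitrary: as bs)
  case Nil then show ?case by simp
next
  case (Cons w ws)
  obtain a as' where a: "as = a # as'" using Cons.prems(1) by (cases as) auto
  obtain b bs' where b: "bs = b # bs'" using Cons.prems(2) by (cases bs) auto
  have gt: "w > sum_list ws" using Cons.prems(3)[of 0] by simp
  have eq: "replicate_mset w a + RM ws as' = replicate_mset w b + RM ws bs'"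
    using Cons.prems(4) a b by simp
  have lb: "length bs' = length ws" using Cons.prems(2) b by simp
  have ab: "a = b"
  proof (rule ccontr)
    assume ne: "a \<noteq> b"
    have "count (replicate_mset w a + RM ws as') a \<ge> w" by simp
    moreover have "count (replicate_mset w b + RM ws bs') a \<le> sum_list ws"
      using ne count_le_size[of "RM ws bs'" a] size_RM[OF lb] by simp
    ultimately show False using eq gt by simp
  qed
  then have "RM ws as' = RM ws bs'" using eq by simp
  moreover have "\<And>i. i < length ws \<Longrightarrow> ws ! i > sum_list (drop (Suc i) ws)"
    using Cons.prems(3) by (metis Suc_less_eq drop_Suc_Cons length_Cons nth_Cons_Suc)
  ultimately have "as' = bs'" using Cons.IH[of as' bs'] Cons.prems(1,2) a b by simp
  then show ?case using a b ab by simp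
qed

definition Rp :: "int \<Rightarrow> nat \<Rightarrow> nat \<Rightarrow> int" where
  "Rp p a x = (if a = 2 then 1 else if a = 1 then (if x = 0 then -1 else p - 1)
              else (if x = 0 then 0 else if x = 1 then -p else p*p - p))"

definition B :: "(nat \<Rightarrow> nat \<Rightarrow> bool) \<Rightarrow> nat \<Rightarrow> nat \<Rightarrow> int" where
  "B m a b = (if m a b then 1 else 0)"

definition Phi :: "nat \<Rightarrow> nat \<Rightarrow> (nat \<Rightarrow> nat \<Rightarrow> bool) \<Rightarrow> nat \<Rightarrow> nat \<Rightarrow> int" where
  "Phi p q m x y = (\<Sum>a<3. \<Sum>b<3. B m a b * Rp (int p) a x * Rp (int q) b y)"

definition waN :: "nat \<Rightarrow> nat \<Rightarrow> nat" where
  "waN p x = (if x = 0 then p*(p-1) else if x = 1 then p - 1 else 1)"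

definition MS :: "nat \<Rightarrow> nat \<Rightarrow> (nat \<Rightarrow> nat \<Rightarrow> bool) \<Rightarrow> int multiset" where
  "MS p q m = (\<Sum>x<3. \<Sum>y<3. replicate_mset (waN p x * waN q y) (Phi p q m x y))"

lemma Phi_y0: "Phi p q m x 0 = Rp p 0 x * (B m 0 2 - B m 0 1) + Rp p 1 x * (B m 1 2 - B m 1 1) + Rp p 2 x * (B m 2 2 - B m 2 1)"
  by (simp add: Phi_def eval_nat_numeral Rp_def algebra_simps)

lemma Phi_x0: "Phi p q m 0 y = Rp q 0 y * (B m 2 0 - B m 1 0) + Rp q 1 y * (B m 2 1 - B m 1 1) + Rp q 2 y * (B m 2 2 - B m 1 2)"
  by (simp add: Phi_def eval_nat_numeral Rp_def algebra_simps)

lemma Phi_y2: "Phi p q m x 2 = Rp p 0 x * (B m 0 2 + (q-1) * B m 0 1 + (q*q-q) * B m 0 0)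
   + Rp p 1 x * (B m 1 2 + (q-1) * B m 1 1 + (q*q-q) * B m 1 0) + Rp p 2 x * (B m 2 2 + (q-1) * B m 2 1 + (q*q-q) * B m 2 0)"
  by (simp add: Phi_def eval_nat_numeral Rp_def algebra_simps)

lemma Rp_dvd: "int q dvd (Rp (int q) b y - Rp (int q) b 0)"
  by (auto simp: Rp_def algebra_simps)

lemma Phi_diff_y: "Phi p q m x y - Phi p q m x 0 = (\<Sum>a<3. \<Sum>b<3. B m a b * Rp (int p) a x * (Rp (int q) b y - Rp (int q) b 0))"
  unfolding Phi_def by (simp add: sum_subtractf[symmetric] algebra_simps)

lemma Phi_mod_q: "Phi p q m x y mod int q = Phi p q m x 0 mod int q"
proof -
  have "int q dvd Phi p q m x y - Phi p q m x 0"
    unfolding Phi_diff_y by (intro dvd_sum dvd_mult) (rule Rp_dvd)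
  then show ?thesis by (simp add: mod_eq_dvd_iff)
qed

lemma Phi_diff_x: "Phi p q m x y - Phi p q m 0 y = (\<Sum>a<3. \<Sum>b<3. B m a b * Rp (int q) b y * (Rp (int p) a x - Rp (int p) a 0))"
  unfolding Phi_def by (simp add: sum_subtractf[symmetric] algebra_simps)

lemma Phi_mod_p: "Phi p q m x y mod int p = Phi p q m 0 y mod int p"
proof -
  have "int p dvd Phi p q m x y - Phi p q m 0 y"
    unfolding Phi_diff_x by (intro dvd_sum dvd_mult) (rule Rp_dvd)
  then show ?thesis by (simp add: mod_eq_dvd_iff)
qed

lemma replicate_mset_plus: "replicate_mset (a + b) x = replicate_mset a x + replicate_mset b x"
  by (induction a) auto

lemma image_mset_sum: "finite A \<Longrightarrow> image_mset f (\<Sum>x\<in>A. g x) = (\<Sum>x\<in>A. image_mset f (g x))"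
  by (induction A rule: finite_induct) auto

lemma sum_replicate_mset: "finite A \<Longrightarrow> (\<Sum>y\<in>A. replicate_mset (f y) c) = replicate_mset (\<Sum>y\<in>A. f y) c"
  by (induction A rule: finite_induct) (auto simp: replicate_mset_plus)

lemma waN_sum: "p \<ge> 1 \<Longrightarrow> sum (waN p) {..<3} = p * p"
  by (simp add: waN_def eval_nat_numeral algebra_simps)

lemma image_MS_q:
  assumes "q \<ge> 1"
  shows "image_mset (\<lambda>v. v mod int q) (MS p q m) =
    RM [waN p 0 * (q*q), waN p 1 * (q*q), waN p 2 * (q*q)] [Phi p q m 0 0 mod q, Phi p q m 1 0 mod q, Phi p q m 2 0 mod q]"
proof -
  have "image_mset (\<lambda>v. v mod int q) (MS p q m) = (\<Sum>x<3. \<Sum>y<3. replicate_mset (waN p x * waN q y) (Phi p q m x 0 mod q))"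
    unfolding MS_def by (simp add: image_mset_sum Phi_mod_q[of p q m _ "Suc _"] Phi_mod_q[of p q m _ 2] eval_nat_numeral)
  also have "\<dots> = (\<Sum>x<3. replicate_mset (waN p x * (q*q)) (Phi p q m x 0 mod q))"
    using waN_sum[OF assms] by (simp add: sum_replicate_mset sum_distrib_left[symmetric])
  also have "\<dots> = RM [waN p 0 * (q*q), waN p 1 * (q*q), waN p 2 * (q*q)] [Phi p q m 0 0 mod q, Phi p q m 1 0 mod q, Phi p q m 2 0 mod q]"
    by (simp add: eval_nat_numeral add_ac)
  finally show ?thesis .
qed

lemma image_MS_p:
  assumes "p \<ge> 1"
  shows "image_mset (\<lambda>v. v mod int p) (MS p q m) =
    RM [waN q 0 * (p*p), waN q 1 * (p*p), waN q 2 * (p*p)] [Phi p q m 0 0 mod p, Phi p q m 0 1 mod p, Phi p q m 0 2 mod p]"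
proof -
  have "MS p q m = (\<Sum>y<3. \<Sum>x<3. replicate_mset (waN p x * waN q y) (Phi p q m x y))"
    unfolding MS_def by (rule sum.swap)
  then have "image_mset (\<lambda>v. v mod int p) (MS p q m) = (\<Sum>y<3. \<Sum>x<3. replicate_mset (waN p x * waN q y) (Phi p q m 0 y mod p))"
    by (simp add: image_mset_sum Phi_mod_p[of p q m "Suc _"] Phi_mod_p[of p q m 2] eval_nat_numeral)
  also have "\<dots> = (\<Sum>y<3. replicate_mset (waN q y * (p*p)) (Phi p q m 0 y mod p))"
    using waN_sum[OF assms] by (simp add: sum_replicate_mset sum_distrib_right[symmetric] mult.commute)
  also have "\<dots> = RM [waN q 0 * (p*p), waN q 1 * (p*p), waN q 2 * (p*p)] [Phi p q m 0 0 mod p, Phi p q m 0 1 mod p, Phi p q m 0 2 mod p]"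
    by (simp add: eval_nat_numeral add_ac)
  finally show ?thesis .
qed

lemma B_cases: "B m a b = 0 \<or> B m a b = 1"
  by (simp add: B_def)

lemma small_dvd: "int r dvd d \<Longrightarrow> \<bar>d\<bar> \<le> 2 \<Longrightarrow> r \<ge> 3 \<Longrightarrow> d = 0"
  using dvd_imp_le_int[of d "int r"] by force

lemma triple_lemma:
  fixes D0 D1 D2 :: int
  assumes r: "prime r" and s: "prime s" and rs: "r \<noteq> s" and r3: "r \<ge> 3"
    and b: "\<bar>D0\<bar> \<le> 2" "\<bar>D1\<bar> \<le> 2" "\<bar>D2\<bar> \<le> 2"
    and d0: "int r dvd (- D1 + D2)"
    and d1: "int r dvd (- int s * D0 + (int s - 1) * D1 + D2)"
    and d2: "int r dvd ((int s * int s - int s) * D0 + (int s - 1) * D1 + D2)"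
  shows "D0 = 0 \<and> D1 = 0 \<and> D2 = 0"
proof -
  have cop: "coprime (int r) (int s)" using primes_coprime[OF r s rs] by (simp add: coprime_int_iff)
  have cop2: "coprime (int r) (int s * int s)" using cop by simp
  have "int r dvd ((int s * int s - int s) * D0 + (int s - 1) * D1 + D2) - (- int s * D0 + (int s - 1) * D1 + D2)"
    using d1 d2 by (rule dvd_diff[rotated])
  then have "int r dvd (int s * int s) * D0" by (simp add: algebra_simps)
  then have "int r dvd D0" using cop2 coprime_dvd_mult_right_iff by blast
  then have z0: "D0 = 0" using small_dvd b r3 by blast
  have "int r dvd (- int s * D0 + (int s - 1) * D1 + D2) - (- D1 + D2)"
    using d0 d1 by (rule dvd_diff[rotated])
  then have "int r dvd int s * D1" using z0 by (simp add: algebra_simps)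
  then have "int r dvd D1" using cop coprime_dvd_mult_right_iff by blast
  then have z1: "D1 = 0" using small_dvd b r3 by blast
  have "int r dvd D2" using d0 z1 by simp
  then have "D2 = 0" using small_dvd b r3 by blast
  then show ?thesis using z0 z1 by simp
qed

lemma superinc3:
  assumes "w2 > 0" "w1 > w2" "w0 > w1 + w2"
  shows "\<And>i. i < length [w0, w1, w2::nat] \<Longrightarrow> [w0, w1, w2] ! i > sum_list (drop (Suc i) [w0, w1, w2])"
  using assms by (auto simp: less_Suc_eq numeral_3_eq_3)

lemma step1:
  assumes p: "prime p" and q: "prime q" and pq: "p < q" and p3: "p \<ge> 3"
    and eq: "MS p q m1 = MS p q m2"
  shows "Phi p q m1 0 0 = Phi p q m2 0 0 \<and> Phi p q m1 1 0 = Phi p q m2 1 0 \<and> Phi p q m1 2 0 = Phi p q m2 2 0"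
proof -
  have q1: "q \<ge> 1" and q3: "q \<ge> 3" using pq p3 by auto
  define ws where "ws = [waN p 0 * (q*q), waN p 1 * (q*q), waN p 2 * (q*q)]"
  have RMeq: "RM ws [Phi p q m1 0 0 mod q, Phi p q m1 1 0 mod q, Phi p q m1 2 0 mod q]
      = RM ws [Phi p q m2 0 0 mod q, Phi p q m2 1 0 mod q, Phi p q m2 2 0 mod q]"
    using image_MS_q[OF q1, of p m1] image_MS_q[OF q1, of p m2] eq by (simp add: ws_def)
  have si: "\<And>i. i < length ws \<Longrightarrow> ws ! i > sum_list (drop (Suc i) ws)"
    unfolding ws_def
  proof (rule superinc3)
    have qq: "q * q > 0" using q1 by simp
    show "waN p 2 * (q*q) > 0" using qq by (simp add: waN_def)
    show "waN p 1 * (q*q) > waN p 2 * (q*q)" using qq p3 by (simp add: waN_def)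
    have "p * (p - 1) \<ge> p * 2" using p3 by (intro mult_le_mono2) auto
    then have "p * (p - 1) > (p - 1) + 1" using p3 by linarith
    then have "p * (p - 1) * (q * q) > ((p - 1) + 1) * (q*q)" using qq by (rule mult_strict_right_mono)
    then show "waN p 0 * (q*q) > waN p 1 * (q*q) + waN p 2 * (q*q)" by (simp add: waN_def algebra_simps)
  qed
  have L: "[Phi p q m1 0 0 mod q, Phi p q m1 1 0 mod q, Phi p q m1 2 0 mod q] = [Phi p q m2 0 0 mod q, Phi p q m2 1 0 mod q, Phi p q m2 2 0 mod q]"
    by (rule RM_inj[OF _ _ si RMeq]) (simp_all add: ws_def)
  have dv: "int q dvd (Phi p q m1 x 0 - Phi p q m2 x 0)" if "x < 3" for x
  proof -
    have "x = 0 \<or> x = 1 \<or> x = 2" using that by auto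
    then have "Phi p q m1 x 0 mod q = Phi p q m2 x 0 mod q" using L by auto
    then show ?thesis by (simp add: mod_eq_dvd_iff)
  qed
  define D where "D a = (B m1 a 2 - B m1 a 1) - (B m2 a 2 - B m2 a 1)" for a
  have bD: "\<bar>D a\<bar> \<le> 2" for a using B_cases[of m1 a 2] B_cases[of m1 a 1] B_cases[of m2 a 2] B_cases[of m2 a 1]
    by (auto simp: D_def)
  have e: "Phi p q m1 x 0 - Phi p q m2 x 0 = Rp p 0 x * D 0 + Rp p 1 x * D 1 + Rp p 2 x * D 2" for x
    by (simp add: Phi_y0 D_def algebra_simps)
  have "D 0 = 0 \<and> D 1 = 0 \<and> D 2 = 0"
  proof (rule triple_lemma[OF q p _ q3 bD bD bD])
    show "q \<noteq> p" using pq by simp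
    show "int q dvd - D 1 + D 2" using dv[of 0] e[of 0] by (simp add: Rp_def)
    show "int q dvd - int p * D 0 + (int p - 1) * D 1 + D 2" using dv[of 1] e[of 1] by (simp add: Rp_def)
    show "int q dvd (int p * int p - int p) * D 0 + (int p - 1) * D 1 + D 2" using dv[of 2] e[of 2] by (simp add: Rp_def)
  qed
  then show ?thesis using e[of 0] e[of 1] e[of 2] by simp
qed

lemma step2:
  assumes p: "prime p" and q: "prime q" and pq: "p < q" and p3: "p \<ge> 3"
    and eq: "MS p q m1 = MS p q m2"
  shows "Phi p q m1 0 0 = Phi p q m2 0 0 \<and> Phi p q m1 0 1 = Phi p q m2 0 1 \<and> Phi p q m1 0 2 = Phi p q m2 0 2"
proof -
  have p1: "p \<ge> 1" and q3: "q \<ge> 3" using pq p3 by auto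
  define ws where "ws = [waN q 0 * (p*p), waN q 1 * (p*p), waN q 2 * (p*p)]"
  have RMeq: "RM ws [Phi p q m1 0 0 mod p, Phi p q m1 0 1 mod p, Phi p q m1 0 2 mod p]
      = RM ws [Phi p q m2 0 0 mod p, Phi p q m2 0 1 mod p, Phi p q m2 0 2 mod p]"
    using image_MS_p[OF p1, of q m1] image_MS_p[OF p1, of q m2] eq by (simp add: ws_def)
  have si: "\<And>i. i < length ws \<Longrightarrow> ws ! i > sum_list (drop (Suc i) ws)"
    unfolding ws_def
  proof (rule superinc3)
    have qq: "p * p > 0" using p1 by simp
    show "waN q 2 * (p*p) > 0" using qq by (simp add: waN_def)
    show "waN q 1 * (p*p) > waN q 2 * (p*p)" using qq q3 by (simp add: waN_def)
    have "q * (q - 1) \<ge> q * 2" using q3 by (intro mult_le_mono2) auto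
    then have "q * (q - 1) > (q - 1) + 1" using q3 by linarith
    then have "q * (q - 1) * (p * p) > ((q - 1) + 1) * (p*p)" using qq by (rule mult_strict_right_mono)
    then show "waN q 0 * (p*p) > waN q 1 * (p*p) + waN q 2 * (p*p)" by (simp add: waN_def algebra_simps)
  qed
  have L: "[Phi p q m1 0 0 mod p, Phi p q m1 0 1 mod p, Phi p q m1 0 2 mod p] = [Phi p q m2 0 0 mod p, Phi p q m2 0 1 mod p, Phi p q m2 0 2 mod p]"
    by (rule RM_inj[OF _ _ si RMeq]) (simp_all add: ws_def)
  have dv: "int p dvd (Phi p q m1 0 y - Phi p q m2 0 y)" if "y < 3" for y
  proof -
    have "y = 0 \<or> y = 1 \<or> y = 2" using that by auto
    then have "Phi p q m1 0 y mod p = Phi p q m2 0 y mod p" using L by auto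
    then show ?thesis by (simp add: mod_eq_dvd_iff)
  qed
  define D where "D b = (B m1 2 b - B m1 1 b) - (B m2 2 b - B m2 1 b)" for b
  have bD: "\<bar>D a\<bar> \<le> 2" for a using B_cases[of m1 2 a] B_cases[of m1 1 a] B_cases[of m2 2 a] B_cases[of m2 1 a]
    by (auto simp: D_def)
  have e: "Phi p q m1 0 y - Phi p q m2 0 y = Rp q 0 y * D 0 + Rp q 1 y * D 1 + Rp q 2 y * D 2" for y
    by (simp add: Phi_x0 D_def algebra_simps)
  have "D 0 = 0 \<and> D 1 = 0 \<and> D 2 = 0"
  proof (rule triple_lemma[OF p q _ p3 bD bD bD])
    show "p \<noteq> q" using pq by simp
    show "int p dvd - D 1 + D 2" using dv[of 0] e[of 0] by (simp add: Rp_def)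
    show "int p dvd - int q * D 0 + (int q - 1) * D 1 + D 2" using dv[of 1] e[of 1] by (simp add: Rp_def)
    show "int p dvd (int q * int q - int q) * D 0 + (int q - 1) * D 1 + D 2" using dv[of 2] e[of 2] by (simp add: Rp_def)
  qed
  then show ?thesis using e[of 0] e[of 1] e[of 2] by simp
qed

definition rs :: "nat \<Rightarrow> (nat \<Rightarrow> nat \<Rightarrow> bool) \<Rightarrow> nat \<Rightarrow> int" where
  "rs q m a = B m a 2 + (int q - 1) * B m a 1 + (int q * int q - int q) * B m a 0"

lemma Phi_y2': "Phi p q m x 2 = Rp p 0 x * rs q m 0 + Rp p 1 x * rs q m 1 + Rp p 2 x * rs q m 2"
  by (simp add: Phi_def eval_nat_numeral Rp_def algebra_simps rs_def)

lemma rowbits: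
  assumes q3: "q \<ge> 3" and eq: "rs q m1 a = rs q m2 a"
  shows "B m1 a 0 = B m2 a 0 \<and> B m1 a 1 = B m2 a 1 \<and> B m1 a 2 = B m2 a 2"
proof -
  have "3 * int q \<le> int q * int q" using q3 by (intro mult_right_mono) auto
  then have Q: "int q * int q - int q \<ge> 2 * int q" by linarith
  define Qv where "Qv = int q * int q - int q"
  have Q': "Qv \<ge> 2 * int q" using Q by (simp add: Qv_def)
  have eq': "B m1 a 2 + (int q - 1) * B m1 a 1 + Qv * B m1 a 0 = B m2 a 2 + (int q - 1) * B m2 a 1 + Qv * B m2 a 0"
    using eq unfolding rs_def Qv_def by simp
  have h0: "B m1 a 0 = B m2 a 0"
  proof (rule ccontr)
    assume ne: "B m1 a 0 \<noteq> B m2 a 0"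
    have b1: "\<bar>(int q - 1) * B m1 a 1 - (int q - 1) * B m2 a 1\<bar> \<le> int q - 1"
      using B_cases[of m1 a 1] B_cases[of m2 a 1] q3 by auto
    have b2: "\<bar>B m1 a 2 - B m2 a 2\<bar> \<le> 1" using B_cases[of m1 a 2] B_cases[of m2 a 2] by auto
    have "\<bar>Qv * B m1 a 0 - Qv * B m2 a 0\<bar> = Qv" using ne B_cases[of m1 a 0] B_cases[of m2 a 0] Q' q3 by auto
    then show False using eq' b1 b2 Q' q3 by linarith
  qed
  then have eq2: "B m1 a 2 + (int q - 1) * B m1 a 1 = B m2 a 2 + (int q - 1) * B m2 a 1" using eq' by simp
  have h1: "B m1 a 1 = B m2 a 1"
  proof (rule ccontr)
    assume ne: "B m1 a 1 \<noteq> B m2 a 1"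
    have b2: "\<bar>B m1 a 2 - B m2 a 2\<bar> \<le> 1" using B_cases[of m1 a 2] B_cases[of m2 a 2] by auto
    have "\<bar>(int q - 1) * B m1 a 1 - (int q - 1) * B m2 a 1\<bar> = int q - 1"
      using ne B_cases[of m1 a 1] B_cases[of m2 a 1] q3 by auto
    then show False using eq2 b2 q3 by linarith
  qed
  then show ?thesis using h0 eq2 by simp
qed

lemma rs_from_Phi:
  assumes p1: "p \<ge> 1"
    and e0: "Phi p q m1 0 2 = Phi p q m2 0 2" and e1: "Phi p q m1 1 2 = Phi p q m2 1 2"
    and e2: "Phi p q m1 2 2 = Phi p q m2 2 2"
  shows "rs q m1 0 = rs q m2 0 \<and> rs q m1 1 = rs q m2 1 \<and> rs q m1 2 = rs q m2 2"
proof -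
  define S where "S a = rs q m1 a - rs q m2 a" for a
  have f0: "- S 1 + S 2 = 0" using e0 unfolding Phi_y2' S_def by (simp add: Rp_def algebra_simps)
  have f1: "- int p * S 0 + (int p - 1) * S 1 + S 2 = 0" using e1 unfolding Phi_y2' S_def by (simp add: Rp_def algebra_simps)
  have f2: "(int p * int p - int p) * S 0 + (int p - 1) * S 1 + S 2 = 0" using e2 unfolding Phi_y2' S_def by (simp add: Rp_def algebra_simps)
  have "(int p * int p) * S 0 = ((int p * int p - int p) * S 0 + (int p - 1) * S 1 + S 2) - (- int p * S 0 + (int p - 1) * S 1 + S 2)"
    by (simp add: algebra_simps)
  also have "\<dots> = 0" using f1 f2 by simp
  finally have "(int p * int p) * S 0 = 0" .
  then have z0: "S 0 = 0" using p1 by simp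
  have "int p * S 1 = (- int p * S 0 + (int p - 1) * S 1 + S 2) - (- S 1 + S 2)" using z0 by (simp add: algebra_simps)
  also have "\<dots> = 0" using f0 f1 by simp
  finally have "int p * S 1 = 0" .
  then have z1: "S 1 = 0" using p1 by simp
  have "S 2 = 0" using f0 z1 by simp
  then show ?thesis using z0 z1 by (simp add: S_def)
qed

lemma bits_from_rs:
  assumes q3: "q \<ge> 3" and "rs q m1 0 = rs q m2 0" "rs q m1 1 = rs q m2 1" "rs q m1 2 = rs q m2 2"
  shows "\<forall>a<3. \<forall>b<3. m1 a b = m2 a b"
proof (intro allI impI)
  fix a b :: nat assume a: "a < 3" and b: "b < 3"
  have "a = 0 \<or> a = 1 \<or> a = 2" using a by auto
  then have "rs q m1 a = rs q m2 a" using assms by auto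
  moreover have "b = 0 \<or> b = 1 \<or> b = 2" using b by auto
  ultimately have "B m1 a b = B m2 a b" using rowbits[OF q3] by blast
  then show "m1 a b = m2 a b" by (auto simp: B_def split: if_splits)
qed

definition K :: "nat \<Rightarrow> nat \<Rightarrow> (nat \<Rightarrow> nat \<Rightarrow> bool) \<Rightarrow> int multiset" where
  "K p q m = replicate_mset (waN p 0 * waN q 0) (Phi p q m 0 0) + replicate_mset (waN p 0 * waN q 1) (Phi p q m 0 1)
     + replicate_mset (waN p 0 * waN q 2) (Phi p q m 0 2) + replicate_mset (waN p 1 * waN q 0) (Phi p q m 1 0)
     + replicate_mset (waN p 2 * waN q 0) (Phi p q m 2 0)"

lemma MS_split: "MS p q m = K p q m + RM [waN p 1 * waN q 1, waN p 2 * waN q 1, waN p 1 * waN q 2, waN p 2 * waN q 2]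
    [Phi p q m 1 1, Phi p q m 2 1, Phi p q m 1 2, Phi p q m 2 2]"
  unfolding MS_def K_def by (simp add: eval_nat_numeral add_ac)

lemma superinc4:
  assumes "w3 > 0" "w2 > w3" "w1 > w2 + w3" "w0 > w1 + w2 + w3"
  shows "\<And>i. i < length [w0, w1, w2, w3::nat] \<Longrightarrow> [w0, w1, w2, w3] ! i > sum_list (drop (Suc i) [w0, w1, w2, w3])"
  using assms by (auto simp: less_Suc_eq numeral_3_eq_3 eval_nat_numeral)

lemma main_ge3:
  assumes p: "prime p" and q: "prime q" and pq: "p < q" and p3: "p \<ge> 3"
    and eq: "MS p q m1 = MS p q m2"
  shows "\<forall>a<3. \<forall>b<3. m1 a b = m2 a b"
proof -
  note s1 = step1[OF p q pq p3 eq] and s2 = step2[OF p q pq p3 eq]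
  have "K p q m1 = K p q m2" using s1 s2 by (simp add: K_def)
  then have RMeq: "RM [waN p 1 * waN q 1, waN p 2 * waN q 1, waN p 1 * waN q 2, waN p 2 * waN q 2]
    [Phi p q m1 1 1, Phi p q m1 2 1, Phi p q m1 1 2, Phi p q m1 2 2] =
    RM [waN p 1 * waN q 1, waN p 2 * waN q 1, waN p 1 * waN q 2, waN p 2 * waN q 2]
    [Phi p q m2 1 1, Phi p q m2 2 1, Phi p q m2 1 2, Phi p q m2 2 2]"
    using eq unfolding MS_split by simp
  have oq: "odd q" using q pq p3 prime_odd_nat[of q] by auto
  have op: "odd p" using p p3 prime_odd_nat[of p] by auto
  have qp2: "q \<ge> p + 2"
  proof (rule ccontr)
    assume "\<not> q \<ge> p + 2"
    then have "q = p + 1" using pq by simp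
    then show False using oq op by simp
  qed
  have si: "\<And>i. i < length [waN p 1 * waN q 1, waN p 2 * waN q 1, waN p 1 * waN q 2, waN p 2 * waN q 2] \<Longrightarrow>
     [waN p 1 * waN q 1, waN p 2 * waN q 1, waN p 1 * waN q 2, waN p 2 * waN q 2] ! i >
     sum_list (drop (Suc i) [waN p 1 * waN q 1, waN p 2 * waN q 1, waN p 1 * waN q 2, waN p 2 * waN q 2])"
  proof (rule superinc4)
    show "waN p 2 * waN q 2 > 0" by (simp add: waN_def)
    show "waN p 1 * waN q 2 > waN p 2 * waN q 2" using p3 by (simp add: waN_def)
    show "waN p 2 * waN q 1 > waN p 1 * waN q 2 + waN p 2 * waN q 2" using qp2 p3 by (simp add: waN_def)
    have f: "(p - 1) * (q - 1) \<ge> 2 * (q - 1)" using p3 by (intro mult_le_mono1) auto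
    have w: "waN p 1 * waN q 1 = (p - 1) * (q - 1)" "waN p 2 * waN q 1 = q - 1" "waN p 1 * waN q 2 = p - 1"
      "waN p 2 * waN q 2 = 1" by (simp_all add: waN_def)
    show "waN p 1 * waN q 1 > waN p 2 * waN q 1 + waN p 1 * waN q 2 + waN p 2 * waN q 2"
      unfolding w using f qp2 p3 by linarith
  qed
  have L: "[Phi p q m1 1 1, Phi p q m1 2 1, Phi p q m1 1 2, Phi p q m1 2 2] = [Phi p q m2 1 1, Phi p q m2 2 1, Phi p q m2 1 2, Phi p q m2 2 2]"
    by (rule RM_inj[OF _ _ si RMeq]) simp_all
  have "rs q m1 0 = rs q m2 0 \<and> rs q m1 1 = rs q m2 1 \<and> rs q m1 2 = rs q m2 2"
    by (rule rs_from_Phi[of p q m1 m2]) (use p3 s2 L in auto)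
  then show ?thesis using bits_from_rs[of q m1 m2] pq p3 by auto
qed

definition R2 :: "nat \<Rightarrow> nat \<Rightarrow> (nat \<Rightarrow> nat \<Rightarrow> bool) \<Rightarrow> int multiset" where
  "R2 p q m = (\<Sum>x<3. replicate_mset (waN p x * waN q 0) (Phi p q m x 0) + replicate_mset (waN p x * waN q 1) (Phi p q m x 1))"

definition W2 :: "nat \<Rightarrow> nat \<Rightarrow> (nat \<Rightarrow> nat \<Rightarrow> bool) \<Rightarrow> int multiset" where
  "W2 p q m = (\<Sum>x<3. replicate_mset (waN p x) (Phi p q m x 2))"

lemma MS_split2: "MS p q m = R2 p q m + W2 p q m"
  unfolding MS_def R2_def W2_def by (simp add: eval_nat_numeral add_ac waN_def)

lemma dvd_count_R2: "(q - 1) dvd count (R2 p q m) v"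
  unfolding R2_def by (simp add: eval_nat_numeral count_sum waN_def)

lemma size_W2: assumes p1: "p \<ge> 1" shows "size (W2 p q m) = p * p"
proof -
  have S: "{..<3::nat} = {0,1,2}" by auto
  obtain k where k: "p = Suc k" using p1 by (cases p) auto
  show ?thesis unfolding W2_def S k by (simp add: waN_def algebra_simps)
qed

lemma W2_eq:
  assumes q: "q - 1 > p * p" and p1: "p \<ge> 1" and eq: "MS p q m1 = MS p q m2"
  shows "W2 p q m1 = W2 p q m2"
proof (rule multiset_eqI)
  fix v
  obtain k1 where k1: "count (R2 p q m1) v = (q - 1) * k1" using dvd_count_R2 by (metis dvdE)
  obtain k2 where k2: "count (R2 p q m2) v = (q - 1) * k2" using dvd_count_R2 by (metis dvdE)
  have c1: "count (W2 p q m1) v < q - 1" using count_le_size[of "W2 p q m1" v] size_W2[OF p1] q by simp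
  have c2: "count (W2 p q m2) v < q - 1" using count_le_size[of "W2 p q m2" v] size_W2[OF p1] q by simp
  have "(q - 1) * k1 + count (W2 p q m1) v = (q - 1) * k2 + count (W2 p q m2) v"
    using arg_cong[OF eq, of "\<lambda>M. count M v"] k1 k2 unfolding MS_split2 by simp
  then have "((q - 1) * k1 + count (W2 p q m1) v) mod (q - 1) = ((q - 1) * k2 + count (W2 p q m2) v) mod (q - 1)"
    by simp
  then show "count (W2 p q m1) v = count (W2 p q m2) v" using c1 c2 by simp
qed

lemma quad_lemma:
  fixes u v w u' v' w' :: int
  assumes nn: "v \<ge> 0" "w \<ge> 0" "v' \<ge> 0" "w' \<ge> 0"
    and eq: "{#u - v, u - v, u + v - 2*w, u + v + 2*w#} = {#u' - v', u' - v', u' + v' - 2*w', u' + v' + 2*w'#}"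
  shows "u = u' \<and> v = v' \<and> w = w'"
proof -
  have "sum_mset {#u - v, u - v, u + v - 2*w, u + v + 2*w#} = sum_mset {#u' - v', u' - v', u' + v' - 2*w', u' + v' + 2*w'#}"
    using eq by simp
  then have uu: "u = u'" by simp
  have "u + v + 2*w \<in># {#u' - v', u' - v', u' + v' - 2*w', u' + v' + 2*w'#}" using eq[symmetric] by simp
  then have t1: "v + 2*w \<le> v' + 2*w'" using uu nn by auto
  have "u' + v' + 2*w' \<in># {#u - v, u - v, u + v - 2*w, u + v + 2*w#}" using eq by simp
  then have t2: "v' + 2*w' \<le> v + 2*w" using uu nn by auto
  have t: "v + 2*w = v' + 2*w'" using t1 t2 by simp
  have "add_mset (u + v + 2*w) {#u - v, u - v, u + v - 2*w#} = add_mset (u + v + 2*w) {#u - v', u - v', u + v' - 2*w'#}"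
    using eq uu t by (simp add: add_mset_commute algebra_simps)
  then have eq3: "{#u - v, u - v, u + v - 2*w#} = {#u - v', u - v', u + v' - 2*w'#}" by simp
  have vv: "v = v'"
  proof (rule ccontr)
    assume ne: "v \<noteq> v'"
    have "count {#u - v, u - v, u + v - 2*w#} (u - v) \<ge> 2" by simp
    moreover have "count {#u - v', u - v', u + v' - 2*w'#} (u - v) \<le> 1" using ne by simp
    ultimately show False using eq3 by simp
  qed
  then show ?thesis using uu t by simp
qed

lemma rs_nonneg:
  assumes "q \<ge> 1" shows "rs q m a \<ge> 0"
proof -
  have "int q * 1 \<le> int q * int q" using assms by (intro mult_left_mono) auto
  then have "int q * int q - int q \<ge> 0" by simp
  moreover have "int q - 1 \<ge> 0" using assms by simp
  ultimately show ?thesis unfolding rs_def B_def by auto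
qed

lemma W2_form: "W2 2 q m = {#rs q m 2 - rs q m 1, rs q m 2 - rs q m 1, rs q m 2 + rs q m 1 - 2 * rs q m 0, rs q m 2 + rs q m 1 + 2 * rs q m 0#}"
proof -
  have P0: "Phi 2 q m 0 2 = rs q m 2 - rs q m 1" by (simp add: Phi_y2' Rp_def)
  have P1: "Phi 2 q m 1 2 = rs q m 2 + rs q m 1 - 2 * rs q m 0" by (simp add: Phi_y2' Rp_def)
  have P2: "Phi 2 q m 2 2 = rs q m 2 + rs q m 1 + 2 * rs q m 0" by (simp add: Phi_y2' Rp_def)
  have S: "{..<3::nat} = {0,1,2}" by auto
  have "W2 2 q m = replicate_mset 2 (Phi 2 q m 0 2) + replicate_mset 1 (Phi 2 q m 1 2) + replicate_mset 1 (Phi 2 q m 2 2)"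
    unfolding W2_def S by (simp add: waN_def)
  also have "\<dots> = {#rs q m 2 - rs q m 1, rs q m 2 - rs q m 1, rs q m 2 + rs q m 1 - 2 * rs q m 0, rs q m 2 + rs q m 1 + 2 * rs q m 0#}"
    unfolding P0 P1 P2 by (simp add: numeral_2_eq_2 add_mset_commute)
  finally show ?thesis .
qed

lemma main_2:
  assumes q7: "q \<ge> 7" and eq: "MS 2 q m1 = MS 2 q m2"
  shows "\<forall>a<3. \<forall>b<3. m1 a b = m2 a b"
proof -
  have "W2 2 q m1 = W2 2 q m2" by (rule W2_eq) (use q7 eq in auto)
  then have "rs q m1 2 = rs q m2 2 \<and> rs q m1 1 = rs q m2 1 \<and> rs q m1 0 = rs q m2 0"
    unfolding W2_form by (intro quad_lemma) (use rs_nonneg q7 in auto)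
  then show ?thesis using bits_from_rs[of q m1 m2] q7 by auto
qed


fun lexless :: "(int \<times> nat) list \<Rightarrow> (int \<times> nat) list \<Rightarrow> bool" where
  "lexless [] [] = False" | "lexless [] (_#_) = True" | "lexless (_#_) [] = False"
| "lexless ((a,b)#xs) ((c,d)#ys) = (a < c \<or> (a = c \<and> (b < d \<or> (b = d \<and> lexless xs ys))))"

lemma lexless_irrefl: "\<not> lexless xs xs"
  by (induction xs) auto

lemma lexless_trans: "lexless xs ys \<Longrightarrow> lexless ys zs \<Longrightarrow> lexless xs zs"
proof (induction xs arbitrary: ys zs)
  case Nil then show ?case by (cases ys; cases zs) auto
next
  case (Cons x xs)
  then show ?case
    by (cases ys; cases zs; cases x) (auto split: prod.splits)
qed

fun merge :: "(int \<times> nat) list list \<Rightarrow> (int \<times> nat) list list \<Rightarrow> (int \<times> nat) list list" where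
  "merge [] ys = ys" | "merge xs [] = xs"
| "merge (x#xs) (y#ys) = (if lexless x y then x # merge xs (y#ys) else y # merge (x#xs) ys)"

fun msort :: "(int \<times> nat) list list \<Rightarrow> (int \<times> nat) list list" where
  "msort xs = (if length xs \<le> 1 then xs else merge (msort (take (length xs div 2) xs)) (msort (drop (length xs div 2) xs)))"

declare msort.simps[simp del]

fun chk :: "(int \<times> nat) list list \<Rightarrow> bool" where
  "chk (x#y#zs) = (lexless x y \<and> chk (y#zs))" | "chk _ = True"

lemma mset_merge: "mset (merge xs ys) = mset xs + mset ys"
  by (induction xs ys rule: merge.induct) auto

lemma mset_msort: "mset (msort xs) = mset xs"
proof (induction xs rule: msort.induct)
  case (1 xs)
  show ?case
  proof (cases "length xs \<le> 1")
    case True then show ?thesis by (simp add: msort.simps)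
  next
    case False
    then have "mset (msort xs) = mset (msort (take (length xs div 2) xs)) + mset (msort (drop (length xs div 2) xs))"
      by (simp add: msort.simps mset_merge)
    also have "\<dots> = mset (take (length xs div 2) xs) + mset (drop (length xs div 2) xs)" using 1 False by simp
    also have "\<dots> = mset xs" by (simp add: mset_append[symmetric] del: mset_append)
    finally show ?thesis .
  qed
qed

lemma chk_sorted: "chk xs \<Longrightarrow> sorted_wrt lexless xs"
proof (induction xs rule: chk.induct)
  case (1 x y zs)
  then have "lexless x y" "sorted_wrt lexless (y#zs)" by auto
  then show ?case using lexless_trans by auto
qed auto

lemma sorted_distinct: "sorted_wrt lexless xs \<Longrightarrow> distinct xs"
  by (induction xs) (auto simp: lexless_irrefl)

lemma chk_msort_distinct: "chk (msort xs) \<Longrightarrow> distinct xs"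
proof -
  assume "chk (msort xs)"
  then have "distinct (msort xs)" using chk_sorted sorted_distinct by blast
  then show "distinct xs" using mset_msort[of xs] mset_eq_imp_distinct_iff by blast
qed

definition canonM :: "int multiset \<Rightarrow> (int \<times> nat) list" where
  "canonM S = map (\<lambda>v. (v, count S v)) (sorted_list_of_set (set_mset S))"

definition canon2 :: "(int \<times> nat) list \<Rightarrow> (int \<times> nat) list" where
  "canon2 vw = map (\<lambda>v. (v, sum_list (map snd (filter (\<lambda>u. fst u = v) vw)))) (sort (remdups (map fst vw)))"

definition vwl :: "nat \<Rightarrow> nat \<Rightarrow> (nat \<Rightarrow> nat \<Rightarrow> bool) \<Rightarrow> (int \<times> nat) list" where
  "vwl p q m = [(Phi p q m x y, waN p x * waN q y). x \<leftarrow> [0,1,2], y \<leftarrow> [0,1,2]]"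

lemma sum_list_filter_snd: "sum_list (map snd (filter (\<lambda>u. fst u = v) xs)) = sum_list (map (\<lambda>(a,b). if v = a then b else 0) xs)"
  by (induction xs) auto

lemma canon_MS:
  assumes p: "p \<ge> 2" and q: "q \<ge> 2"
  shows "canonM (MS p q m) = canon2 (vwl p q m)"
proof -
  have S: "{..<3::nat} = {0,1,2}" by auto
  have pos: "waN p x * waN q y > 0" for x y using p q by (simp add: waN_def)
  have MSe: "MS p q m = (\<Sum>x\<in>{0,1,2}. \<Sum>y\<in>{0,1,2}. replicate_mset (waN p x * waN q y) (Phi p q m x y))"
    unfolding MS_def S ..
  have nz: "waN p x \<noteq> 0" "waN q x \<noteq> 0" for x using p q by (auto simp: waN_def)
  have rep: "set_mset (replicate_mset (waN p x * waN q y) c) = {c}" for x y c using pos[of x y] by simp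
  have set: "set_mset (MS p q m) = set (map fst (vwl p q m))"
    unfolding MSe vwl_def by (simp add: nz insert_commute split del: if_split)
  have cnt: "count (MS p q m) v = sum_list (map snd (filter (\<lambda>u. fst u = v) (vwl p q m)))" for v
    unfolding MSe vwl_def sum_list_filter_snd by (simp split del: if_split add: add_ac)
  show ?thesis unfolding canonM_def canon2_def set sorted_list_of_set_sort_remdups cnt ..
qed

definition mlist :: "bool list \<Rightarrow> nat \<Rightarrow> nat \<Rightarrow> bool" where
  "mlist ms a b = (\<not>(a = 2 \<and> b = 2) \<and> ms ! (3*a+b))"

definition mkl :: "(nat \<Rightarrow> nat \<Rightarrow> bool) \<Rightarrow> bool list" where
  "mkl m = [m 0 0, m 0 1, m 0 2, m 1 0, m 1 1, m 1 2, m 2 0, m 2 1]"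

lemma mkl_in: "mkl m \<in> set (List.n_lists 8 [False, True])"
  unfolding set_n_lists mkl_def by auto

lemma mlist_mkl: assumes "\<not> m 2 2" "a < 3" "b < 3" shows "mlist (mkl m) a b = m a b"
proof -
  have "a = 0 \<or> a = 1 \<or> a = 2" "b = 0 \<or> b = 1 \<or> b = 2" using assms by auto
  then show ?thesis using assms(1) by (auto simp: mlist_def mkl_def)
qed

lemma Phi_cong: "(\<And>a b. a < 3 \<Longrightarrow> b < 3 \<Longrightarrow> m a b = m' a b) \<Longrightarrow> Phi p q m x y = Phi p q m' x y"
  unfolding Phi_def B_def by (intro sum.cong refl) auto

lemma MS_cong: "(\<And>a b. a < 3 \<Longrightarrow> b < 3 \<Longrightarrow> m a b = m' a b) \<Longrightarrow> MS p q m = MS p q m'"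
  unfolding MS_def using Phi_cong[of m m' p q] by simp

definition PhiL :: "nat \<Rightarrow> nat \<Rightarrow> bool list \<Rightarrow> nat \<Rightarrow> nat \<Rightarrow> int" where
  "PhiL p q ms x y = sum_list [(if mlist ms a b then Rp (int p) a x * Rp (int q) b y else 0). a \<leftarrow> [0,1,2], b \<leftarrow> [0,1,2]]"

lemma PhiL_eq: "PhiL p q ms x y = Phi p q (mlist ms) x y"
proof -
  have S: "{..<3::nat} = {0,1,2}" by auto
  show ?thesis unfolding PhiL_def Phi_def S B_def by simp
qed

definition canonL :: "nat \<Rightarrow> nat \<Rightarrow> bool list \<Rightarrow> (int \<times> nat) list" where
  "canonL p q ms = canon2 [(PhiL p q ms x y, waN p x * waN q y). x \<leftarrow> [0,1,2], y \<leftarrow> [0,1,2]]"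

lemma canonL_eq: "canonL p q ms = canon2 (vwl p q (mlist ms))"
  unfolding canonL_def vwl_def PhiL_eq ..

lemma finite_case:
  assumes p: "p \<ge> 2" and q: "q \<ge> 2" and comp: "chk (msort (map (canonL p q) (List.n_lists 8 [False, True])))"
    and m1: "\<not> m1 2 2" and m2: "\<not> m2 2 2" and eq: "MS p q m1 = MS p q m2"
  shows "\<forall>a<3. \<forall>b<3. m1 a b = m2 a b"
proof -
  have d: "distinct (map (canonL p q) (List.n_lists 8 [False, True]))" using comp by (rule chk_msort_distinct)
  then have inj: "inj_on (canonL p q) (set (List.n_lists 8 [False, True]))" by (simp add: distinct_map)
  have e1: "MS p q m1 = MS p q (mlist (mkl m1))" by (rule MS_cong) (simp add: mlist_mkl[of m1, OF m1])
  have e2: "MS p q m2 = MS p q (mlist (mkl m2))" by (rule MS_cong) (simp add: mlist_mkl[of m2, OF m2])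
  have "canonL p q (mkl m1) = canonL p q (mkl m2)"
    unfolding canonL_eq canon_MS[OF p q, symmetric] using e1 e2 eq by simp
  then have "mkl m1 = mkl m2" using inj mkl_in by (meson inj_onD)
  then show ?thesis using mlist_mkl[of m1, OF m1] mlist_mkl[of m2, OF m2] by metis
qed



lemma comp23: "chk (msort (map (canonL 2 3) (List.n_lists 8 [False, True])))"
  by code_simp

lemma comp25: "chk (msort (map (canonL 2 5) (List.n_lists 8 [False, True])))"
  by code_simp


lemma cop_pow: fixes p q :: nat shows "prime p \<Longrightarrow> prime q \<Longrightarrow> p \<noteq> q \<Longrightarrow> coprime (p ^ a) (q ^ b :: nat)"
  using primes_coprime[of p q] by (simp add: coprime_power_left_iff coprime_power_right_iff)

lemma dvd_pq_iff:
  fixes p q :: nat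
  assumes "prime p" "prime q" "p \<noteq> q"
  shows "(p ^ a * q ^ b dvd (k::nat)) \<longleftrightarrow> p ^ a dvd k \<and> q ^ b dvd k"
proof
  assume "p ^ a * q ^ b dvd k"
  then show "p ^ a dvd k \<and> q ^ b dvd k" using dvd_mult_left dvd_mult_right by blast
next
  assume "p ^ a dvd k \<and> q ^ b dvd k"
  then show "p ^ a * q ^ b dvd k" using cop_pow[OF assms, of a b] divides_mult[of "p^a" k "q^b"] by blast
qed

lemma pq_pow_dvd:
  fixes p q :: nat
  assumes p: "prime p" and q: "prime q" and pq: "p \<noteq> q"
  shows "p ^ a * q ^ b dvd p ^ i * q ^ j \<longleftrightarrow> a \<le> i \<and> b \<le> j"
proof -
  have p2: "p \<ge> 2" and q2: "q \<ge> 2" using p q prime_ge_2_nat by auto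
  have "p ^ a * q ^ b dvd p ^ i * q ^ j \<longleftrightarrow> p ^ a dvd p ^ i * q ^ j \<and> q ^ b dvd p ^ i * q ^ j"
    by (rule dvd_pq_iff[OF p q pq])
  also have "p ^ a dvd p ^ i * q ^ j \<longleftrightarrow> p ^ a dvd p ^ i"
    using cop_pow[OF p q pq, of a j] by (simp add: coprime_dvd_mult_left_iff)
  also have "q ^ b dvd p ^ i * q ^ j \<longleftrightarrow> q ^ b dvd q ^ j"
    using cop_pow[OF q p pq[symmetric], of b i] by (simp add: coprime_dvd_mult_right_iff)
  finally show ?thesis using dvd_power_iff_le[OF p2] dvd_power_iff_le[OF q2] by simp
qed

lemma pq_inj:
  fixes p q :: nat
  assumes p: "prime p" and q: "prime q" and pq: "p \<noteq> q" and eq: "p ^ a * q ^ b = p ^ i * q ^ (j::nat)"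
  shows "a = i \<and> b = j"
proof -
  have "p ^ a * q ^ b dvd p ^ i * q ^ j" using eq by simp
  moreover have "p ^ i * q ^ j dvd p ^ a * q ^ b" using eq by simp
  ultimately show ?thesis using pq_pow_dvd[OF p q pq, of a b i j] pq_pow_dvd[OF p q pq, of i j a b] by simp
qed

lemma div_char:
  fixes p q d :: nat
  assumes p: "prime p" and q: "prime q" and d: "d dvd p^2 * q^2"
  shows "\<exists>i\<le>2. \<exists>j\<le>2. d = p ^ i * q ^ j"
proof -
  obtain b' c' where bc: "d = b' * c'" "b' dvd p^2" "c' dvd q^2" using division_decomp[OF d] by blast
  moreover obtain i where "i \<le> 2" "b' = p ^ i" using divides_primepow_nat[OF p] bc(2) by blast
  moreover obtain j where "j \<le> 2" "c' = q ^ j" using divides_primepow_nat[OF q] bc(3) by blast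
  ultimately show ?thesis by blast
qed

lemma gcd_char:
  fixes p q k :: nat
  assumes p: "prime p" and q: "prime q" and pq: "p \<noteq> q" and a: "a \<le> 2" and b: "b \<le> 2"
  shows "gcd k (p^2 * q^2) = p ^ a * q ^ b \<longleftrightarrow>
    (p ^ a dvd k \<and> \<not> (a < 2 \<and> p ^ (a+1) dvd k)) \<and> (q ^ b dvd k \<and> \<not> (b < 2 \<and> q ^ (b+1) dvd k))"
    (is "?L \<longleftrightarrow> ?R")
proof
  assume L: ?L
  have gk: "p ^ a * q ^ b dvd k" using gcd_dvd1[of k "p^2*q^2"] L by simp
  then have ab: "p ^ a dvd k" "q ^ b dvd k" using dvd_pq_iff[OF p q pq] by auto
  have na: "\<not> (a < 2 \<and> p ^ (a+1) dvd k)"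
  proof
    assume h: "a < 2 \<and> p ^ (a+1) dvd k"
    have "p ^ (a+1) * q ^ 0 dvd p^2 * q^2" using h pq_pow_dvd[OF p q pq, of "a+1" 0 2 2] by linarith
    then have "p ^ (a+1) * q ^ 0 dvd gcd k (p^2 * q^2)" using h by simp
    then have "p ^ (a+1) * q ^ 0 dvd p ^ a * q ^ b" using L by simp
    then show False using pq_pow_dvd[OF p q pq, of "a+1" 0 a b] by linarith
  qed
  have nb: "\<not> (b < 2 \<and> q ^ (b+1) dvd k)"
  proof
    assume h: "b < 2 \<and> q ^ (b+1) dvd k"
    have "p ^ 0 * q ^ (b+1) dvd p^2 * q^2" using h pq_pow_dvd[OF p q pq, of 0 "b+1" 2 2] by linarith
    then have "p ^ 0 * q ^ (b+1) dvd gcd k (p^2 * q^2)" using h by simp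
    then have "p ^ 0 * q ^ (b+1) dvd p ^ a * q ^ b" using L by simp
    then show False using pq_pow_dvd[OF p q pq, of 0 "b+1" a b] by linarith
  qed
  show ?R using ab na nb by simp
next
  assume R: ?R
  define g where "g = gcd k (p^2 * q^2)"
  have "g dvd p^2 * q^2" unfolding g_def by simp
  then obtain i j where ij: "i \<le> 2" "j \<le> 2" "g = p ^ i * q ^ j" using div_char[OF p q] by blast
  have "p ^ a * q ^ b dvd k" using R dvd_pq_iff[OF p q pq] by simp
  moreover have "p ^ a * q ^ b dvd p^2 * q^2" using pq_pow_dvd[OF p q pq] a b by simp
  ultimately have "p ^ a * q ^ b dvd g" unfolding g_def by simp
  then have ai: "a \<le> i" "b \<le> j" using ij pq_pow_dvd[OF p q pq] by auto
  have gk: "p ^ i * q ^ j dvd k" using gcd_dvd1[of k "p^2*q^2"] ij unfolding g_def by simp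
  have "i \<le> a"
  proof (rule ccontr)
    assume "\<not> i \<le> a"
    then have "a < 2" "p ^ (a+1) * q ^ 0 dvd p ^ i * q ^ j" using ij pq_pow_dvd[OF p q pq, of "a+1" 0 i j] by auto
    then have "p ^ (a+1) dvd p ^ i * q ^ j" by simp
    then have "p ^ (a+1) dvd k" using gk by (rule dvd_trans)
    then show False using R \<open>a < 2\<close> by simp
  qed
  moreover have "j \<le> b"
  proof (rule ccontr)
    assume "\<not> j \<le> b"
    then have "b < 2" "p ^ 0 * q ^ (b+1) dvd p ^ i * q ^ j" using ij pq_pow_dvd[OF p q pq, of 0 "b+1" i j] by auto
    then have "q ^ (b+1) dvd p ^ i * q ^ j" by simp
    then have "q ^ (b+1) dvd k" using gk by (rule dvd_trans)
    then show False using R \<open>b < 2\<close> by simp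
  qed
  ultimately show ?L using ij ai unfolding g_def by simp
qed


lemma sum_dvd_reindex:
  fixes M n :: nat and f :: "nat \<Rightarrow> 'a::comm_monoid_add"
  assumes M: "M > 0" and Mn: "M dvd n"
  shows "(\<Sum>k<n. if M dvd k then f k else 0) = (\<Sum>l<n div M. f (M*l))"
proof -
  have nM: "n = M * (n div M)" using Mn by simp
  have "(\<Sum>k<n. if M dvd k then f k else 0) = sum f {k \<in> {..<n}. M dvd k}"
    using sum.inter_filter[of "{..<n}" f "\<lambda>k. M dvd k"] by simp
  also have "{k \<in> {..<n}. M dvd k} = (\<lambda>l. M*l) ` {..<n div M}"
  proof
    show "{k \<in> {..<n}. M dvd k} \<subseteq> (\<lambda>l. M*l) ` {..<n div M}"
    proof
      fix k assume "k \<in> {k \<in> {..<n}. M dvd k}"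
      then obtain l where kl: "k = M*l" "k < n" by (auto elim: dvdE)
      then have "M * l < M * (n div M)" using nM by simp
      then have "l < n div M" using M by simp
      then show "k \<in> (\<lambda>l. M*l) ` {..<n div M}" using kl by auto
    qed
    show "(\<lambda>l. M*l) ` {..<n div M} \<subseteq> {k \<in> {..<n}. M dvd k}"
    proof
      fix k assume "k \<in> (\<lambda>l. M*l) ` {..<n div M}"
      then obtain l where kl: "k = M*l" "l < n div M" by auto
      then have "M * l < M * (n div M)" using M by simp
      then show "k \<in> {k \<in> {..<n}. M dvd k}" using kl nM by auto
    qed
  qed
  also have "sum f ((\<lambda>l. M*l) ` {..<n div M}) = (\<Sum>l<n div M. f (M*l))"
    using M by (subst sum.reindex) (auto simp: inj_on_def)
  finally show ?thesis .
qed

lemma W_scale: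
  assumes "n = M * N" "M > 0"
  shows "W n (M * x) = W N x"
  unfolding W_def using assms by (simp add: field_simps)

lemma T_sum:
  assumes n: "n \<ge> 1" and M: "M > 0" and Mn: "M dvd n"
  shows "(\<Sum>k<n. if M dvd k then W n (k*t) else 0) = (if (n div M) dvd t then of_nat (n div M) else 0)"
proof -
  define N where "N = n div M"
  have nMN: "n = M * N" using Mn by (simp add: N_def)
  have N1: "N \<ge> 1" using n nMN by (cases N) auto
  have "(\<Sum>k<n. if M dvd k then W n (k*t) else 0) = (\<Sum>l<N. W n (M*l*t))"
    unfolding N_def by (rule sum_dvd_reindex[OF M Mn])
  also have "\<dots> = (\<Sum>l<N. W N (l*t))"
    using W_scale[OF nMN M] by (simp add: mult.assoc)
  also have "\<dots> = (if N dvd t then of_nat N else 0)" by (rule geom_W[OF N1])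
  finally show ?thesis unfolding N_def .
qed

definition cx :: "nat \<Rightarrow> nat \<Rightarrow> nat" where
  "cx p t = (if p^2 dvd t then 2 else if p dvd t then 1 else 0)"

lemma cx_le: "cx p t \<le> 2" by (simp add: cx_def)

lemma pow_dvd_cx:
  assumes "e \<le> 2"
  shows "(p::nat)^e dvd t \<longleftrightarrow> e \<le> cx p t"
proof -
  have "e = 0 \<or> e = 1 \<or> e = 2" using assms by auto
  moreover have "p^2 dvd t \<Longrightarrow> p dvd t" by (metis dvd_mult_left power2_eq_square)
  ultimately show ?thesis by (auto simp: cx_def)
qed

definition tau :: "nat \<Rightarrow> nat \<Rightarrow> nat \<Rightarrow> int" where
  "tau p e x = (if 2 - e \<le> x then int p ^ (2 - e) else 0)"

lemma Rp_tau:
  assumes "a \<le> 2" "x \<le> 2"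
  shows "Rp (int p) a x = tau p a x - (if a < 2 then tau p (a+1) x else 0)"
proof -
  have "a = 0 \<or> a = 1 \<or> a = 2" "x = 0 \<or> x = 1 \<or> x = 2" using assms by auto
  then show ?thesis by (auto simp: Rp_def tau_def power2_eq_square)
qed

context
  fixes p q :: nat
  assumes p: "prime p" and q: "prime q" and pq: "p \<noteq> q"
begin

lemma S_sum:
  assumes e: "e \<le> 2" and f: "f \<le> 2"
  shows "(\<Sum>k<p^2*q^2. (if p^e dvd k \<and> q^f dvd k then W (p^2*q^2) (k*t) else 0)) =
     of_int (tau p e (cx p t) * tau q f (cx q t))"
proof -
  define n where "n = p^2*q^2"
  have p0: "p > 0" and q0: "q > 0" using p q prime_gt_0_nat by auto
  have n1: "n \<ge> 1" using p0 q0 by (simp add: n_def)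
  have M0: "p^e * q^f > 0" using p0 q0 by simp
  have Mn: "p^e * q^f dvd n" unfolding n_def using pq_pow_dvd[OF p q pq] e f by simp
  have ndiv: "n div (p^e * q^f) = p^(2-e) * q^(2-f)"
  proof -
    have pp: "p^2 = p^e * p^(2-e)" using e by (simp add: power_add[symmetric])
    have qq: "q^2 = q^f * q^(2-f)" using f by (simp add: power_add[symmetric])
    have "n = (p^e * q^f) * (p^(2-e) * q^(2-f))"
      unfolding n_def pp qq by (simp add: algebra_simps)
    then show ?thesis using M0 by simp
  qed
  have "(\<Sum>k<n. (if p^e dvd k \<and> q^f dvd k then W n (k*t) else 0)) = (\<Sum>k<n. (if p^e * q^f dvd k then W n (k*t) else 0))"
    using dvd_pq_iff[OF p q pq] by simp
  also have "\<dots> = (if p^(2-e) * q^(2-f) dvd t then of_nat (p^(2-e) * q^(2-f)) else 0)"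
    using T_sum[OF n1 M0 Mn] ndiv by simp
  also have "\<dots> = of_int (tau p e (cx p t) * tau q f (cx q t))"
    using dvd_pq_iff[OF p q pq, of "2-e" "2-f" t] pow_dvd_cx[of "2-e" p t] pow_dvd_cx[of "2-f" q t]
    by (simp add: tau_def)
  finally show ?thesis unfolding n_def .
qed


definition SS :: "nat \<Rightarrow> nat \<Rightarrow> nat \<Rightarrow> complex" where
  "SS t e f = (\<Sum>k<p^2*q^2. (if p^e dvd k \<and> q^f dvd k then W (p^2*q^2) (k*t) else 0))"

lemma SS_val: "e \<le> 2 \<Longrightarrow> f \<le> 2 \<Longrightarrow> SS t e f = of_int (tau p e (cx p t) * tau q f (cx q t))"
  unfolding SS_def by (rule S_sum)

lemma sum_if_const: "(\<Sum>k\<in>A. if c then g k else 0) = (if c then (\<Sum>k\<in>A. g k) else 0)"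
  by (cases c) simp_all

lemma G_sum:
  assumes a: "a \<le> 2" and b: "b \<le> 2"
  shows "(\<Sum>k<p^2*q^2. ((if p^a dvd k then 1 else 0) - (if a < 2 \<and> p^(a+1) dvd k then 1 else 0))
          * ((if q^b dvd k then 1 else 0) - (if b < 2 \<and> q^(b+1) dvd k then 1 else 0)) * W (p^2*q^2) (k*t))
       = of_int (Rp (int p) a (cx p t) * Rp (int q) b (cx q t))"
proof -
  let ?n = "p^2*q^2"
  have e: "((if p^a dvd k then 1 else 0) - (if a < 2 \<and> p^(a+1) dvd k then 1 else 0))
          * ((if q^b dvd k then 1 else 0) - (if b < 2 \<and> q^(b+1) dvd k then 1 else 0)) * w
     = (if p^a dvd k \<and> q^b dvd k then w else 0) - (if b < 2 then (if p^a dvd k \<and> q^(b+1) dvd k then w else 0) else 0)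
       - (if a < 2 then (if p^(a+1) dvd k \<and> q^b dvd k then w else 0) else 0)
       + (if a < 2 \<and> b < 2 then (if p^(a+1) dvd k \<and> q^(b+1) dvd k then w else 0) else 0)" for k and w :: complex
    by (auto simp: algebra_simps)
  have "(\<Sum>k<?n. ((if p^a dvd k then 1 else 0) - (if a < 2 \<and> p^(a+1) dvd k then 1 else 0))
          * ((if q^b dvd k then 1 else 0) - (if b < 2 \<and> q^(b+1) dvd k then 1 else 0)) * W ?n (k*t))
     = SS t a b - (if b < 2 then SS t a (b+1) else 0) - (if a < 2 then SS t (a+1) b else 0)
       + (if a < 2 \<and> b < 2 then SS t (a+1) (b+1) else 0)"
    unfolding e SS_def by (simp add: sum.distrib sum_subtractf sum_if_const)
  also have "\<dots> = of_int ((tau p a (cx p t) - (if a < 2 then tau p (a+1) (cx p t) else 0)) *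
       (tau q b (cx q t) - (if b < 2 then tau q (b+1) (cx q t) else 0)))"
  proof (cases "a < 2"; cases "b < 2")
    assume "a < 2" "b < 2"
    then show ?thesis using SS_val[of a b t] SS_val[of "a+1" b t] SS_val[of a "b+1" t] SS_val[of "a+1" "b+1" t] a b
      by (simp only: if_True if_False) (simp add: algebra_simps)
  next
    assume "a < 2" "\<not> b < 2"
    then show ?thesis using SS_val[of a b t] SS_val[of "a+1" b t] a b
      by (simp only: if_True if_False) (simp add: algebra_simps)
  next
    assume "\<not> a < 2" "b < 2"
    then show ?thesis using SS_val[of a b t] SS_val[of a "b+1" t] a b
      by (simp only: if_True if_False) (simp add: algebra_simps)
  next
    assume "\<not> a < 2" "\<not> b < 2"
    then show ?thesis using SS_val[of a b t] a b
      by (simp only: if_True if_False) (simp add: algebra_simps)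
  qed
  also have "\<dots> = of_int (Rp (int p) a (cx p t) * Rp (int q) b (cx q t))"
    using Rp_tau[OF a cx_le, of p p t] Rp_tau[OF b cx_le, of q q t] by simp
  finally show ?thesis .
qed


lemma bool_ind: "(A' \<longrightarrow> A) \<Longrightarrow> (B' \<longrightarrow> Bq) \<Longrightarrow>
  (if (A \<and> \<not> A') \<and> (Bq \<and> \<not> B') then 1 else 0 :: complex) =
    ((if A then 1 else 0) - (if A' then 1 else 0)) * ((if Bq then 1 else 0) - (if B' then 1 else 0))"
  by auto

lemma sum_if_const0: "(\<Sum>k\<in>A. if c then g k else 0) = (if c then (\<Sum>k\<in>A. g k) else 0)"
  by (cases c) simp_all

lemma sum_delta2:
  assumes "i \<in> AS" "j \<in> BS" "finite AS" "finite BS"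
  shows "(\<Sum>a\<in>AS. \<Sum>b\<in>BS. if P a b then (if a = i \<and> b = j then 1 else 0) else 0) = (if P i j then 1 else (0::complex))"
proof -
  have "(if P a b then (if a = i \<and> b = j then 1 else 0) else 0) = (if a = i then (if b = j then (if P i j then 1 else 0) else 0) else (0::complex))" for a b
    by auto
  then have "(\<Sum>a\<in>AS. \<Sum>b\<in>BS. if P a b then (if a = i \<and> b = j then 1 else 0) else 0) =
     (\<Sum>a\<in>AS. \<Sum>b\<in>BS. if a = i then (if b = j then (if P i j then 1 else 0) else 0) else (0::complex))" by simp
  also have "\<dots> = (\<Sum>a\<in>AS. if a = i then (\<Sum>b\<in>BS. if b = j then (if P i j then 1 else 0) else 0) else (0::complex))"
    by (intro sum.cong refl) (simp only: sum_if_const0)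
  also have "\<dots> = (if P i j then 1 else 0)" using assms by (simp only: sum.delta' sum.delta if_True)
  finally show ?thesis .
qed

lemma ind_gcd:
  assumes a: "a \<le> 2" and b: "b \<le> 2"
  shows "(if gcd k (p^2*q^2) = p^a*q^b then 1 else 0 :: complex) =
    ((if p^a dvd k then 1 else 0) - (if a < 2 \<and> p^(a+1) dvd k then 1 else 0))
          * ((if q^b dvd k then 1 else 0) - (if b < 2 \<and> q^(b+1) dvd k then 1 else 0))"
proof -
  have pa: "p^(a+1) dvd k \<Longrightarrow> p^a dvd k" by (metis dvd_mult_right power_Suc Suc_eq_plus1)
  have qb: "q^(b+1) dvd k \<Longrightarrow> q^b dvd k" by (metis dvd_mult_right power_Suc Suc_eq_plus1)
  show ?thesis unfolding gcd_char[OF p q pq a b, of k] by (rule bool_ind) (use pa qb in auto)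
qed

lemma c_decomp:
  assumes D: "D \<subseteq> {d. d dvd p^2*q^2}"
  shows "(if gcd k (p^2*q^2) \<in> D then 1 else 0 :: complex) =
    (\<Sum>a<3. \<Sum>b<3. if p^a*q^b \<in> D then (if gcd k (p^2*q^2) = p^a*q^b then 1 else 0) else 0)"
proof -
  have "gcd k (p^2*q^2) dvd p^2*q^2" by simp
  then obtain i j where ij: "i \<le> 2" "j \<le> 2" "gcd k (p^2*q^2) = p^i * q^j" using div_char[OF p q] by blast
  have eq: "gcd k (p^2*q^2) = p^a*q^b \<longleftrightarrow> a = i \<and> b = j" for a b
    using ij(3) pq_inj[OF p q pq, of a b i j] by auto
  have "(\<Sum>a<3. \<Sum>b<3. if p^a*q^b \<in> D then (if a = i \<and> b = j then 1 else 0) else 0) = (if p^i*q^j \<in> D then 1 else (0::complex))"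
    by (rule sum_delta2) (use ij in auto)
  then show ?thesis unfolding eq using ij(3) by simp
qed

lemma ev_formula:
  assumes D: "D \<subseteq> {d. d dvd p^2*q^2}"
  shows "(\<Sum>k<p^2*q^2. (if gcd k (p^2*q^2) \<in> D then 1 else 0) * W (p^2*q^2) (k*t)) =
     of_int (Phi p q (\<lambda>a b. p^a*q^b \<in> D) (cx p t) (cx q t))"
proof -
  let ?n = "p^2*q^2"
  have "(\<Sum>k<?n. (if gcd k ?n \<in> D then 1 else 0) * W ?n (k*t)) =
      (\<Sum>k<?n. \<Sum>a<3. \<Sum>b<3. (if p^a*q^b \<in> D then (if gcd k ?n = p^a*q^b then 1 else 0) else 0) * W ?n (k*t))"
    unfolding c_decomp[OF D] by (simp only: sum_distrib_right)
  also have "\<dots> = (\<Sum>a<3. \<Sum>k<?n. \<Sum>b<3. (if p^a*q^b \<in> D then (if gcd k ?n = p^a*q^b then 1 else 0) else 0) * W ?n (k*t))"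
    by (rule sum.swap)
  also have "\<dots> = (\<Sum>a<3. \<Sum>b<3. \<Sum>k<?n. (if p^a*q^b \<in> D then (if gcd k ?n = p^a*q^b then 1 else 0) else 0) * W ?n (k*t))"
    by (rule sum.cong[OF refl], rule sum.swap)
  also have "\<dots> = (\<Sum>a<3. \<Sum>b<3. if p^a*q^b \<in> D then of_int (Rp (int p) a (cx p t) * Rp (int q) b (cx q t)) else 0)"
  proof (intro sum.cong refl)
    fix a b assume "a \<in> {..<3::nat}" "b \<in> {..<3::nat}"
    then have a: "a \<le> 2" and b: "b \<le> 2" by auto
    show "(\<Sum>k<?n. (if p^a*q^b \<in> D then (if gcd k ?n = p^a*q^b then 1 else 0) else 0) * W ?n (k*t)) =
      (if p^a*q^b \<in> D then of_int (Rp (int p) a (cx p t) * Rp (int q) b (cx q t)) else 0)"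
      using G_sum[OF a b, of t] unfolding ind_gcd[OF a b, symmetric] by (cases "p^a*q^b \<in> D") simp_all
  qed
  also have "\<dots> = of_int (Phi p q (\<lambda>a b. p^a*q^b \<in> D) (cx p t) (cx q t))"
    unfolding Phi_def B_def of_int_sum by (intro sum.cong refl) auto
  finally show ?thesis .
qed


definition alpha :: "nat \<Rightarrow> nat \<Rightarrow> int" where
  "alpha x e = (if e = x then 1 else if e = x + 1 then -1 else 0)"

lemma ind_cx:
  fixes r :: nat
  assumes x: "x < 3"
  shows "(if cx r t = x then 1 else 0 :: int) = (\<Sum>e<3. alpha x e * (if r^e dvd t then 1 else 0))"
proof -
  have S: "{..<3::nat} = {0,1,2}" by auto
  have "(\<Sum>e<3. alpha x e * (if r^e dvd t then 1 else 0)) = (\<Sum>e<3. alpha x e * (if e \<le> cx r t then 1 else 0))"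
    by (intro sum.cong refl) (simp add: pow_dvd_cx)
  moreover have "x = 0 \<or> x = 1 \<or> x = 2" "cx r t = 0 \<or> cx r t = 1 \<or> cx r t = 2" using x cx_le[of r t] by auto
  ultimately show ?thesis unfolding S by (auto simp: alpha_def)
qed

lemma alpha_sum:
  assumes x: "x < 3" and r1: "r \<ge> 1"
  shows "(\<Sum>e<3. alpha x e * int r ^ (2 - e)) = int (waN r x)"
proof -
  have S: "{..<3::nat} = {0,1,2}" by auto
  have "x = 0 \<or> x = 1 \<or> x = 2" using x by auto
  then show ?thesis unfolding S using r1 by (auto simp: alpha_def waN_def power2_eq_square of_nat_diff algebra_simps)
qed

lemma count_mult:
  assumes e: "e \<le> 2" and f: "f \<le> 2"
  shows "(\<Sum>t<p^2*q^2. (if p^e dvd t then 1 else 0) * (if q^f dvd t then 1 else 0) :: int) = int p ^ (2-e) * int q ^ (2-f)"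
proof -
  define n where "n = p^2*q^2"
  have p0: "p > 0" and q0: "q > 0" using p q prime_gt_0_nat by auto
  have M0: "p^e * q^f > 0" using p0 q0 by simp
  have Mn: "p^e * q^f dvd n" unfolding n_def using pq_pow_dvd[OF p q pq] e f by simp
  have ndiv: "n div (p^e * q^f) = p^(2-e) * q^(2-f)"
  proof -
    have pp: "p^2 = p^e * p^(2-e)" using e by (simp add: power_add[symmetric])
    have qq: "q^2 = q^f * q^(2-f)" using f by (simp add: power_add[symmetric])
    have "n = (p^e * q^f) * (p^(2-e) * q^(2-f))"
      unfolding n_def pp qq by (simp add: algebra_simps)
    then show ?thesis using M0 by simp
  qed
  have "(\<Sum>t<n. (if p^e dvd t then 1 else 0) * (if q^f dvd t then 1 else 0) :: int) = (\<Sum>t<n. if p^e * q^f dvd t then 1 else 0)"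
    using dvd_pq_iff[OF p q pq] by (intro sum.cong refl) simp
  also have "\<dots> = (\<Sum>l<n div (p^e * q^f). 1)" by (rule sum_dvd_reindex[OF M0 Mn])
  also have "\<dots> = int p ^ (2-e) * int q ^ (2-f)" unfolding ndiv by simp
  finally show ?thesis unfolding n_def .
qed

lemma card_class:
  assumes x: "x < 3" and y: "y < 3"
  shows "card {t \<in> {..<p^2*q^2}. cx p t = x \<and> cx q t = y} = waN p x * waN q y"
proof -
  let ?n = "p^2*q^2"
  have "int (card {t \<in> {..<?n}. cx p t = x \<and> cx q t = y}) = (\<Sum>t<?n. if cx p t = x \<and> cx q t = y then 1 else 0)"
    using sum.inter_filter[of "{..<?n}" "\<lambda>_. 1::int" "\<lambda>t. cx p t = x \<and> cx q t = y"] by simp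
  also have "\<dots> = (\<Sum>t<?n. (if cx p t = x then 1 else 0) * (if cx q t = y then 1 else 0))"
    by (intro sum.cong refl) simp
  also have "\<dots> = (\<Sum>t<?n. (\<Sum>e<3. alpha x e * (if p^e dvd t then 1 else 0)) * (\<Sum>f<3. alpha y f * (if q^f dvd t then 1 else 0)))"
    unfolding ind_cx[OF x] ind_cx[OF y] ..
  also have "\<dots> = (\<Sum>t<?n. \<Sum>e<3. \<Sum>f<3. alpha x e * alpha y f * ((if p^e dvd t then 1 else 0) * (if q^f dvd t then 1 else 0)))"
    by (simp add: sum_product algebra_simps)
  also have "\<dots> = (\<Sum>e<3. \<Sum>f<3. \<Sum>t<?n. alpha x e * alpha y f * ((if p^e dvd t then 1 else 0) * (if q^f dvd t then 1 else 0)))"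
    by (subst sum.swap, rule sum.cong[OF refl], rule sum.swap)
  also have "\<dots> = (\<Sum>e<3. \<Sum>f<3. alpha x e * alpha y f * (int p ^ (2-e) * int q ^ (2-f)))"
    by (intro sum.cong refl) (simp add: sum_distrib_left[symmetric] count_mult)
  also have "\<dots> = (\<Sum>e<3. alpha x e * int p ^ (2-e)) * (\<Sum>f<3. alpha y f * int q ^ (2-f))"
    by (simp add: sum_product algebra_simps)
  also have "\<dots> = int (waN p x * waN q y)"
    using alpha_sum[OF x, of p] alpha_sum[OF y, of q] prime_ge_1_nat[OF p] prime_ge_1_nat[OF q] by simp
  finally show ?thesis by linarith
qed

lemma classes_mset:
  "image_mset (\<lambda>t. (cx p t, cx q t)) (mset_set {..<p^2*q^2}) = (\<Sum>x<3. \<Sum>y<3. replicate_mset (waN p x * waN q y) (x,y))"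
proof (rule multiset_eqI)
  fix xy :: "nat \<times> nat"
  obtain x y where xy: "xy = (x,y)" by (cases xy)
  have L: "count (image_mset (\<lambda>t. (cx p t, cx q t)) (mset_set {..<p^2*q^2})) xy = card {t \<in> {..<p^2*q^2}. cx p t = x \<and> cx q t = y}"
    unfolding xy by (simp add: count_image_mset_eq_card_vimage)
  have R: "count (\<Sum>x<3. \<Sum>y<3. replicate_mset (waN p x * waN q y) (x,y)) xy = (\<Sum>x'<3. \<Sum>y'<3. if x = x' \<and> y = y' then waN p x' * waN q y' else 0)"
    unfolding xy by (simp add: count_sum)
  show "count (image_mset (\<lambda>t. (cx p t, cx q t)) (mset_set {..<p^2*q^2})) xy = count (\<Sum>x<3. \<Sum>y<3. replicate_mset (waN p x * waN q y) (x,y)) xy"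
  proof (cases "x < 3 \<and> y < 3")
    case True
    have "(\<Sum>x'<3. \<Sum>y'<3. if x = x' \<and> y = y' then waN p x' * waN q y' else 0) = waN p x * waN q y"
    proof -
      have "(\<Sum>x'<3. \<Sum>y'<3. if x = x' \<and> y = y' then waN p x' * waN q y' else 0)
          = (\<Sum>x'<3. if x = x' then (\<Sum>y'<3. if y = y' then waN p x * waN q y else 0) else 0)"
        by (intro sum.cong refl) (auto simp: sum_if_const0)
      also have "\<dots> = waN p x * waN q y" using True by (simp add: sum.delta)
      finally show ?thesis .
    qed
    then show ?thesis using L R card_class True by simp
  next
    case False
    have "cx p t = x \<Longrightarrow> cx q t = y \<Longrightarrow> x < 3 \<and> y < 3" for t using cx_le[of p t] cx_le[of q t] by auto
    then have "{t \<in> {..<p^2*q^2}. cx p t = x \<and> cx q t = y} = {}" using False by blast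
    moreover have "(\<Sum>x'<3. \<Sum>y'<3. if x = x' \<and> y = y' then waN p x' * waN q y' else 0) = 0"
      using False by (intro sum.neutral ballI) auto
    ultimately show ?thesis using L R by simp
  qed
qed

end


lemma ICG_circ:
  assumes n: "n \<ge> 1" and nD: "n \<notin> D"
  shows "ICG_adj n D = circ n (\<lambda>k. if gcd k n \<in> D then 1 else 0)"
proof (rule eq_matI)
  fix i j assume "i < dim_row (circ n (\<lambda>k. if gcd k n \<in> D then 1 else 0))" "j < dim_col (circ n (\<lambda>k. if gcd k n \<in> D then 1 else 0))"
  then have ij: "i < n" "j < n" by (auto simp: circ_def)
  define r where "r = (j + n - i) mod n"
  have r_lt: "r < n" using n by (simp add: r_def)
  have "(int j - int i) mod int n = int ((j + n - i) mod n)"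
  proof -
    have "int ((j + n - i) mod n) = int (j + n - i) mod int n" by (simp add: zmod_int)
    also have "int (j + n - i) = (int j - int i) + int n" using ij by simp
    also have "\<dots> mod int n = (int j - int i) mod int n" by simp
    finally show ?thesis by simp
  qed
  then have zr: "zrep n (int j - int i) = (if r = 0 then n else r)"
    unfolding zrep_def r_def Let_def by simp
  have mem: "x \<in> conn_set n D \<longleftrightarrow> x \<in> {1..n} \<and> gcd x n \<in> D" for x
    unfolding conn_set_def Gset_def by auto
  have "(zrep n (int j - int i) \<in> conn_set n D) = (gcd r n \<in> D)"
    unfolding zr mem using nD r_lt by auto
  then show "ICG_adj n D $$ (i, j) = circ n (\<lambda>k. if gcd k n \<in> D then 1 else 0) $$ (i, j)"
    using ij by (simp add: ICG_adj_def circ_def r_def)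
qed (auto simp: ICG_adj_def circ_def)

context
  fixes p q :: nat
  assumes p: "prime p" and q: "prime q" and pq: "p \<noteq> q"
begin

lemma Spec_MS:
  assumes D: "D \<subseteq> {d. d dvd p^2*q^2} - {p^2*q^2}"
  shows "Spec (ICG_adj (p^2*q^2) D) = image_mset of_int (MS p q (\<lambda>a b. p^a*q^b \<in> D))"
proof -
  let ?n = "p^2*q^2"
  let ?m = "\<lambda>a b. p^a*q^b \<in> D"
  have n1: "?n \<ge> 1" using p q prime_gt_0_nat by (simp add: Suc_le_eq)
  have nD: "?n \<notin> D" using D by auto
  have D': "D \<subseteq> {d. d dvd p^2*q^2}" using D by auto
  have "Spec (ICG_adj ?n D) = image_mset (\<lambda>t. \<Sum>k<?n. (if gcd k ?n \<in> D then 1 else 0) * W ?n (k*t)) (mset_set {..<?n})"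
    unfolding ICG_circ[OF n1 nD] by (rule circ_spec[OF n1])
  also have "\<dots> = image_mset (\<lambda>t. of_int (Phi p q ?m (cx p t) (cx q t))) (mset_set {..<?n})"
    using ev_formula[OF p q pq D'] by simp
  also have "\<dots> = image_mset (\<lambda>xy. of_int (Phi p q ?m (fst xy) (snd xy))) (image_mset (\<lambda>t. (cx p t, cx q t)) (mset_set {..<?n}))"
    by (simp add: image_mset.compositionality comp_def)
  also have "\<dots> = image_mset (\<lambda>xy. of_int (Phi p q ?m (fst xy) (snd xy))) (\<Sum>x<3. \<Sum>y<3. replicate_mset (waN p x * waN q y) (x,y))"
    unfolding classes_mset[OF p q pq] ..
  also have "\<dots> = image_mset of_int (MS p q ?m)"
    unfolding MS_def by (simp add: image_mset_sum)
  finally show ?thesis .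
qed

end

lemma C_main:
  assumes p: "prime p" and q: "prime q" and pq: "p < q" and m1: "\<not> m1 2 2" and m2: "\<not> m2 2 2"
    and eq: "MS p q m1 = MS p q m2"
  shows "\<forall>a<3. \<forall>b<3. m1 a b = m2 a b"
proof (cases "p \<ge> 3")
  case True
  show ?thesis by (rule main_ge3[OF p q pq True eq])
next
  case False
  then have p2: "p = 2" using prime_ge_2_nat[OF p] by simp
  show ?thesis
  proof (cases "q \<ge> 7")
    case True
    then show ?thesis using main_2[OF True] eq p2 by simp
  next
    case False
    have "q = 3 \<or> q = 5"
    proof -
      have "q \<in> {3,4,5,6}" using False pq p2 by auto
      moreover have "\<not> prime (4::nat)" "\<not> prime (6::nat)" by (auto simp: prime_nat_iff) (auto intro: exI[of _ 2])
      ultimately show ?thesis using q by auto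
    qed
    then show ?thesis
    proof
      assume "q = 3"
      then show ?thesis using finite_case[of 2 3 m1 m2, OF _ _ comp23 m1 m2] eq p2 by simp
    next
      assume "q = 5"
      then show ?thesis using finite_case[of 2 5 m1 m2, OF _ _ comp25 m1 m2] eq p2 by simp
    qed
  qed
qed

theorem theorem1p4:
  fixes p q n :: nat and D1 D2 :: "nat set"
  assumes "prime p" and "prime q" and "2 \<le> p" and "p < q"
    and "n = p^2 * q^2"
    and "D1 \<subseteq> {d. d dvd n} - {n}"
    and "D2 \<subseteq> {d. d dvd n} - {n}"
    and "Spec (ICG_adj n D1) = Spec (ICG_adj n D2)"
  shows "D1 = D2"
proof -
  note p = assms(1) and q = assms(2) and pq = assms(4)
  have pq': "p \<noteq> q" using pq by simp
  let ?m1 = "\<lambda>a b. p^a*q^b \<in> D1"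
  let ?m2 = "\<lambda>a b. p^a*q^b \<in> D2"
  have "image_mset of_int (MS p q ?m1) = (image_mset of_int (MS p q ?m2) :: complex multiset)"
    using Spec_MS[OF p q pq', of D1] Spec_MS[OF p q pq', of D2] assms(5-8) by simp
  then have "image_mset (\<lambda>z. \<lfloor>Re z\<rfloor>) (image_mset of_int (MS p q ?m1)) = image_mset (\<lambda>z. \<lfloor>Re z\<rfloor>) (image_mset (of_int :: int \<Rightarrow> complex) (MS p q ?m2))"
    by simp
  then have eqMS: "MS p q ?m1 = MS p q ?m2" by (simp add: image_mset.compositionality comp_def)
  have n1: "\<not> ?m1 2 2" "\<not> ?m2 2 2" using assms(5-7) by auto
  have bits: "\<forall>a<3. \<forall>b<3. ?m1 a b = ?m2 a b" by (rule C_main[OF p q pq n1 eqMS])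
  have sub: "\<exists>a<3. \<exists>b<3. d = p^a*q^b" if "D \<subseteq> {d. d dvd n} - {n}" "d \<in> D" for D d
  proof -
    have "d dvd p^2 * q^2" using that assms(5) by auto
    then obtain i j where "i \<le> 2" "j \<le> 2" "d = p^i * q^j" using div_char[OF p q, of d] by blast
    moreover have "i < 3" "j < 3" using \<open>i \<le> 2\<close> \<open>j \<le> 2\<close> by auto
    ultimately show ?thesis by blast
  qed
  show ?thesis
  proof
    show "D1 \<subseteq> D2"
    proof
      fix d assume "d \<in> D1"
      then obtain a b where "a < 3" "b < 3" "d = p^a*q^b" using sub[OF assms(6)] by blast
      then show "d \<in> D2" using bits \<open>d \<in> D1\<close> by auto
    qed
    show "D2 \<subseteq> D1"
    proof
      fix d assume "d \<in> D2"
      then obtain a b where "a < 3" "b < 3" "d = p^a*q^b" using sub[OF assms(7)] by blast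
      then show "d \<in> D1" using bits \<open>d \<in> D2\<close> by auto
    qed
  qed
qed


end
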